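(* Let $i\ge1$ and let $(a_j)_{j\ge1}$ satisfy $0<a_j\le Aj$ for some $A>0$. Let $y_0\in\mathcal X^+_{1,i}$ with $y_{i,0}>0$, and let $y$ be the solution of $dy/dt=F(y)$, $y(0)=y_0$. Then there exist $t_*\in(0,\infty]$ and $t_{*,1}\in[t_*,\infty]$ such that: - $y_i(t)>0$ for $t\in[0,t_* )$, and $y_i(t_* )=0$ if $t_*<\infty$; - $y_{ki}(t)>0$ for $t\in(0,t_* )$ and all $k\ge2$; - $y_j(t)\ge0$ for $t\in[0,t_* )$ and $j\ge i+1$; - $y_j(t)>0$ for $t\in[0,t_* )$ whenever $j\ge i+1$ and $y_{j,0}>0$; - $\frac{dy_i}{dt}(t)<0$ for $t\in[0,t_{*,1})$; - $\|y(t)\|_{1,1}=\|y_0\|_{1,1}$ for $t\in[0,t_* )$. If $t_*<\infty$, then $t_{*,1}>t_*$, and the second, third, fourth and last properties also hold at $t=t_*$.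
   Context: $\|x\|_{1,1}=\sum_j j|x_j|$, $\mathcal X_{1,1}=\{x:\|x\|_{1,1}<\infty\}$, $\mathcal X_{1,i}=\{x\in\mathcal X_{1,1}:x_j=0 \text{ for } j<i\}$, and $\mathcal X^+_{1,i}$ is the subset with nonnegative entries. $F$ is defined by - $F_j(y)=0$ for $j<i$; - $F_i(y)=-a_iy_i-\sum_{j\ge i}a_jy_j$; - $F_j(y)=a_{j-i}y_{j-i}-a_jy_j$ for $j\ge i+1$. The solution $y\in C([0,\infty);\mathcal X_{1,i})$, with $C^1$ components, exists and is unique. *)

theory Defs
  imports "HOL-Analysis.Analysis"
begin

text \<open>Sequences x = (x_j)_{j \<ge> 1} are modelled as functions nat => real;
  the entry at index 0 is forced to be 0 by membership in X_{1,i} (i \<ge> 1).\<close>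

definition norm11 :: "(nat \<Rightarrow> real) \<Rightarrow> real" where
  "norm11 x = (\<Sum>j. real j * \<bar>x j\<bar>)"

definition X11 :: "(nat \<Rightarrow> real) set" where
  "X11 = {x. summable (\<lambda>j. real j * \<bar>x j\<bar>)}"

definition X1i :: "nat \<Rightarrow> (nat \<Rightarrow> real) set" where
  "X1i i = {x \<in> X11. \<forall>j<i. x j = 0}"

definition X1i_plus :: "nat \<Rightarrow> (nat \<Rightarrow> real) set" where
  "X1i_plus i = {x \<in> X1i i. \<forall>j. x j \<ge> 0}"

definition F :: "(nat \<Rightarrow> real) \<Rightarrow> nat \<Rightarrow> (nat \<Rightarrow> real) \<Rightarrow> nat \<Rightarrow> real" where
  "F a i y j =
     (if j < i then 0
      else if j = i then - a i * y i - (\<Sum>n. a (n + i) * y (n + i))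
      else a (j - i) * y (j - i) - a j * y j)"

definition is_solution :: "(nat \<Rightarrow> real) \<Rightarrow> nat \<Rightarrow> (nat \<Rightarrow> real) \<Rightarrow> (real \<Rightarrow> nat \<Rightarrow> real) \<Rightarrow> bool" where
  "is_solution a i y0 y \<longleftrightarrow>
     y 0 = y0 \<and>
     (\<forall>t\<ge>0. y t \<in> X1i i) \<and>
     (\<forall>t\<ge>0. ((\<lambda>s. norm11 (\<lambda>j. y s j - y t j)) \<longlongrightarrow> 0) (at t within {0..})) \<and>
     (\<forall>j. \<forall>t\<ge>0. ((\<lambda>s. y s j) has_real_derivative F a i (y t) j) (at t within {0..})) \<and>
     (\<forall>j. continuous_on {0..} (\<lambda>t. F a i (y t) j))"

end

theory Submission
  imports Defs
begin


lemma mvt0: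
  fixes f f' :: "real \<Rightarrow> real"
  assumes t: "0 < t" and der: "\<And>s. 0 \<le> s \<Longrightarrow> (f has_real_derivative f' s) (at s within {0..})"
  shows "\<exists>\<xi>. 0 < \<xi> \<and> \<xi> < t \<and> f t - f 0 = t * f' \<xi>"
proof -
  have cont: "continuous_on {0..t} f"
    by (rule continuous_on_subset[OF DERIV_continuous_on[of "{0..}" f f']]) (auto intro: der)
  have dat: "(f has_real_derivative f' s) (at s)" if "0 < s" for s
  proof -
    have "(f has_real_derivative f' s) (at s within {0<..})"
      using der[of s] that by (auto intro: has_field_derivative_subset)
    then show ?thesis using that at_within_open[of s "{0<..}"] by simp
  qed
  obtain l z where "0 < z" "z < t" "DERIV f z :> l" "f t - f 0 = (t - 0) * l"
    using MVT[OF t cont] dat real_differentiable_def by (metis)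
  moreover have "l = f' z" using DERIV_unique[OF \<open>DERIV f z :> l\<close> dat[OF \<open>0<z\<close>]] .
  ultimately show ?thesis by auto
qed

lemma exp_growth:
  fixes f g :: "real \<Rightarrow> real" and b t :: real
  assumes t: "0 \<le> t" and der: "\<And>s. 0 \<le> s \<Longrightarrow> (f has_real_derivative (g s - b * f s)) (at s within {0..})"
    and g: "\<And>s. 0 < s \<Longrightarrow> s < t \<Longrightarrow> g s \<ge> 0"
  shows "f t \<ge> exp (-(b * t)) * f 0"
    and "0 < t \<Longrightarrow> (\<And>s. 0 < s \<Longrightarrow> s < t \<Longrightarrow> g s > 0) \<Longrightarrow> f t > exp (-(b * t)) * f 0"
proof -
  define h where "h s = exp (b * s) * f s" for s
  have hd: "(h has_real_derivative (exp (b * s) * g s)) (at s within {0..})" if "0 \<le> s" for s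
  proof -
    have "((\<lambda>s. exp (b * s) * f s) has_real_derivative
       (exp (b * s) * b) * f s + (g s - b * f s) * exp (b * s)) (at s within {0..})"
      by (intro DERIV_mult der that derivative_eq_intros) auto
    then show ?thesis unfolding h_def by (simp add: algebra_simps)
  qed
  have key: "exp (b * t) * f t \<ge> f 0 \<and> (0 < t \<longrightarrow> (\<forall>s. 0 < s \<longrightarrow> s < t \<longrightarrow> g s > 0) \<longrightarrow> exp (b * t) * f t > f 0)"
  proof (cases "t = 0")
    case True then show ?thesis by simp
  next
    case False
    then have tp: "0 < t" using t by simp
    obtain \<xi> where x: "0 < \<xi>" "\<xi> < t" "h t - h 0 = t * (exp (b * \<xi>) * g \<xi>)"
      using mvt0[OF tp hd] by blast
    have "t * (exp (b * \<xi>) * g \<xi>) \<ge> 0" using g[OF x(1,2)] tp by simp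
    moreover have "(\<forall>s. 0 < s \<longrightarrow> s < t \<longrightarrow> g s > 0) \<longrightarrow> t * (exp (b * \<xi>) * g \<xi>) > 0"
      using x tp by simp
    ultimately show ?thesis using x(3) tp unfolding h_def by auto
  qed
  have e: "exp (-(b * t)) * (exp (b * t) * f t) = f t"
    by (simp add: exp_minus field_simps)
  show "f t \<ge> exp (-(b * t)) * f 0"
    using key mult_left_mono[of "f 0" "exp (b * t) * f t" "exp (-(b * t))"] e by simp
  show "0 < t \<Longrightarrow> (\<And>s. 0 < s \<Longrightarrow> s < t \<Longrightarrow> g s > 0) \<Longrightarrow> f t > exp (-(b * t)) * f 0"
    using key mult_strict_left_mono[of "f 0" "exp (b * t) * f t" "exp (-(b * t))"] e by simp
qed



context
  fixes i :: nat and a :: "nat \<Rightarrow> real" and A :: real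
    and y0 :: "nat \<Rightarrow> real" and y :: "real \<Rightarrow> nat \<Rightarrow> real"
  assumes i: "i \<ge> 1"
    and A: "A > 0"
    and a_pos: "\<forall>j\<ge>1. a j > 0"
    and a_le: "\<forall>j\<ge>1. a j \<le> A * real j"
    and y0: "y0 \<in> X1i_plus i"
    and y0i: "y0 i > 0"
    and sol: "is_solution a i y0 y"
begin

lemma y00: "y 0 = y0" using sol unfolding is_solution_def by simp
lemma summ: "0 \<le> t \<Longrightarrow> summable (\<lambda>j. real j * \<bar>y t j\<bar>)"
  using sol unfolding is_solution_def X1i_def X11_def by auto
lemma zb: "0 \<le> t \<Longrightarrow> j < i \<Longrightarrow> y t j = 0"
  using sol unfolding is_solution_def X1i_def X11_def by auto
lemma der: "0 \<le> t \<Longrightarrow> ((\<lambda>s. y s j) has_real_derivative F a i (y t) j) (at t within {0..})"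
  using sol unfolding is_solution_def by auto
lemma Fcont: "continuous_on {0..} (\<lambda>t. F a i (y t) j)"
  using sol unfolding is_solution_def by auto
lemma ncont: "0 \<le> t \<Longrightarrow> ((\<lambda>s. norm11 (\<lambda>j. y s j - y t j)) \<longlongrightarrow> 0) (at t within {0..})"
  using sol unfolding is_solution_def by auto
lemma contj: "continuous_on {0..} (\<lambda>s. y s j)"
  by (rule DERIV_continuous_on[where D="\<lambda>t. F a i (y t) j"]) (auto intro: der)
lemma y0nn: "y0 j \<ge> 0" using y0 unfolding X1i_plus_def by auto
lemma y0summ: "summable (\<lambda>j. real j * \<bar>y0 j\<bar>)" using summ[of 0] y00 by simp

lemma Fgt: "j > i \<Longrightarrow> F a i x j = a (j-i) * x (j-i) - a j * x j"
  unfolding F_def by auto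
lemma Fi: "F a i x i = - a i * x i - (\<Sum>n. a (n+i) * x (n+i))"
  unfolding F_def by auto
lemma Flt: "j < i \<Longrightarrow> F a i x j = 0"
  unfolding F_def by auto

lemma exists_ts: "\<exists>ts::ereal. ts > 0 \<and> (\<forall>s. 0 \<le> s \<and> ereal s < ts \<longrightarrow> y s i > 0)
   \<and> (\<forall>s. ts = ereal s \<longrightarrow> y s i = 0)"
proof -
  define Z where "Z = {0..} \<inter> (\<lambda>t. y t i) -` {0}"
  have pos_before: "y s i > 0" if "0 \<le> s" "\<forall>z\<in>Z. s < z" for s
  proof (rule ccontr)
    assume "\<not> y s i > 0"
    then have "y s i \<le> 0" by simp
    moreover have "0 \<le> y 0 i" using y0i y00 by simp
    moreover have "continuous_on {0..s} (\<lambda>t. y t i)"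
      using continuous_on_subset[OF contj] by auto
    ultimately have "\<exists>x\<ge>0. x \<le> s \<and> y x i = 0"
      using IVT2'[of "\<lambda>t. y t i" s 0 0] that(1) by simp
    then obtain z where "0 \<le> z" "z \<le> s" "y z i = 0" by blast
    then have "z \<in> Z" unfolding Z_def by auto
    then show False using that \<open>z \<le> s\<close> by auto
  qed
  show ?thesis
  proof (cases "Z = {}")
    case True
    then show ?thesis using pos_before by (intro exI[of _ "\<infinity>"]) auto
  next
    case False
    have "closed Z" unfolding Z_def by (rule continuous_closed_preimage[OF contj]) auto
    moreover have "bdd_below Z" unfolding Z_def by (auto intro: bdd_belowI[of _ 0])
    ultimately have inZ: "Inf Z \<in> Z" using closed_contains_Inf False by blast
    then have "Inf Z \<noteq> 0" using y0i y00 unfolding Z_def by auto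
    then have p: "Inf Z > 0" using inZ unfolding Z_def by auto
    have "\<forall>s. 0 \<le> s \<and> s < Inf Z \<longrightarrow> y s i > 0"
      using pos_before cInf_lower[OF _ \<open>bdd_below Z\<close>] by force
    moreover have "y (Inf Z) i = 0" using inZ unfolding Z_def by auto
    ultimately show ?thesis using p by (intro exI[of _ "ereal (Inf Z)"]) auto
  qed
qed

end


lemma Fg: "j > i \<Longrightarrow> F a i x j = a (j-i) * x (j-i) - a j * x j"
  unfolding F_def by auto
lemma Fii: "F a i x i = - a i * x i - (\<Sum>n. a (n+i) * x (n+i))"
  unfolding F_def by auto

context
  fixes i :: nat and a :: "nat \<Rightarrow> real" and A :: real
    and y0 :: "nat \<Rightarrow> real" and y :: "real \<Rightarrow> nat \<Rightarrow> real"
  assumes i: "i \<ge> 1"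
    and A: "A > 0"
    and a_pos: "\<forall>j\<ge>1. a j > 0"
    and a_le: "\<forall>j\<ge>1. a j \<le> A * real j"
    and y0: "y0 \<in> X1i_plus i"
    and y0i: "y0 i > 0"
    and sol: "is_solution a i y0 y"
begin

lemmas y00' = y00[OF i A a_pos a_le y0 y0i sol]
lemmas summ' = summ[OF i A a_pos a_le y0 y0i sol]
lemmas zb' = zb[OF i A a_pos a_le y0 y0i sol]
lemmas der' = der[OF i A a_pos a_le y0 y0i sol]
lemmas y0nn' = y0nn[OF i A a_pos a_le y0 y0i sol]

lemma sumA: "0 \<le> t \<Longrightarrow> summable (\<lambda>n. a (n+i) * y t (n+i))"
proof -
  assume t: "0 \<le> t"
  have "summable (\<lambda>n. A * ((\<lambda>j. real j * \<bar>y t j\<bar>) (n+i)))"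
    using summ'[OF t] summable_iff_shift[of "\<lambda>j. real j * \<bar>y t j\<bar>" i] by (intro summable_mult) simp
  moreover have "norm (a (n+i) * y t (n+i)) \<le> A * ((\<lambda>j. real j * \<bar>y t j\<bar>) (n+i))" for n
  proof -
    have "a (n+i) > 0" "a (n+i) \<le> A * real (n+i)" using a_pos a_le[rule_format, of "n+i"] i by auto
    then have "a (n+i) * \<bar>y t (n+i)\<bar> \<le> (A * real (n+i)) * \<bar>y t (n+i)\<bar>"
      by (intro mult_right_mono) auto
    then show ?thesis using \<open>a (n+i) > 0\<close> by (simp add: abs_mult mult.assoc)
  qed
  ultimately show ?thesis by (rule summable_comparison_test'[where N=0])
qed

context
  fixes ts :: ereal
  assumes ts0: "ts > 0" and tsb: "\<forall>s. 0 \<le> s \<and> ereal s < ts \<longrightarrow> y s i > 0"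
    and tsz: "\<forall>s. ts = ereal s \<longrightarrow> y s i = 0"
begin

lemma yi_nn: "0 \<le> s \<Longrightarrow> ereal s \<le> ts \<Longrightarrow> y s i \<ge> 0"
  using tsb tsz by (metis less_eq_real_def order_le_less)

lemma ygt: "j \<ge> i+1 \<Longrightarrow> 0 \<le> t \<Longrightarrow> ereal t \<le> ts \<Longrightarrow> y t j \<ge> exp (-(a j * t)) * y0 j"
proof (induction j arbitrary: t rule: less_induct)
  case (less j)
  have ji: "j > i" using less.prems by simp
  have g: "a (j-i) * y s (j-i) \<ge> 0" if "0 < s" "s < t" for s
  proof -
    have s: "0 \<le> s" "ereal s \<le> ts" using that less.prems by (auto intro: order_trans[of _ "ereal t"])
    have "a (j-i) > 0" using a_pos ji by auto
    moreover have "y s (j-i) \<ge> 0"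
    proof (cases "j - i < i")
      case True then show ?thesis using zb'[OF s(1)] by simp
    next
      case False
      show ?thesis
      proof (cases "j - i = i")
        case True then show ?thesis using yi_nn[OF s] by simp
      next
        case False
        then have "j - i \<ge> i+1" using \<open>\<not> j - i < i\<close> by simp
        then have "y s (j-i) \<ge> exp (-(a (j-i) * s)) * y0 (j-i)"
          using less.IH[of "j-i" s] s ji i by auto
        moreover have "exp (-(a (j-i) * s)) * y0 (j-i) \<ge> 0" using y0nn' by simp
        ultimately show ?thesis by linarith
      qed
    qed
    ultimately show ?thesis by simp
  qed
  have d: "((\<lambda>s. y s j) has_real_derivative (a (j-i) * y s (j-i) - a j * y s j)) (at s within {0..})"
    if "0 \<le> s" for s
    using der'[OF that, of j] Fg[OF ji] by simp
  show ?case using exp_growth(1)[of t "\<lambda>s. y s j" "\<lambda>s. a (j-i) * y s (j-i)" "a j", OF less.prems(2) d g]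
    y00' by simp
qed

lemma ynn: "0 \<le> t \<Longrightarrow> ereal t \<le> ts \<Longrightarrow> y t j \<ge> 0"
proof -
  assume t: "0 \<le> t" "ereal t \<le> ts"
  consider "j < i" | "j = i" | "j \<ge> i+1" by linarith
  then show ?thesis
  proof cases
    case 1 then show ?thesis using zb'[OF t(1)] by simp
  next
    case 2 then show ?thesis using yi_nn[OF t] by simp
  next
    case 3
    have "exp (-(a j * t)) * y0 j \<ge> 0" using y0nn' by simp
    then show ?thesis using ygt[OF 3 t] by linarith
  qed
qed

lemma ypos: "j \<ge> i+1 \<Longrightarrow> y0 j > 0 \<Longrightarrow> 0 \<le> t \<Longrightarrow> ereal t \<le> ts \<Longrightarrow> y t j > 0"
proof -
  assume a: "j \<ge> i+1" "y0 j > 0" "0 \<le> t" "ereal t \<le> ts"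
  have "exp (-(a j * t)) * y0 j > 0" using a by simp
  then show ?thesis using ygt[OF a(1,3,4)] by linarith
qed

lemma yki_aux: "0 < t \<Longrightarrow> ereal t \<le> ts \<Longrightarrow> y t ((m+2) * i) > 0"
proof (induction m arbitrary: t)
  case 0
  have ji: "2*i > i" using i by simp
  have g: "a i * y s i > 0" if "0 < s" "s < t" for s
  proof -
    have "ereal s < ts" using that 0 by (auto intro: less_le_trans[of _ "ereal t"])
    then show ?thesis using tsb a_pos i that by auto
  qed
  have d: "((\<lambda>s. y s (2*i)) has_real_derivative (a i * y s i - a (2*i) * y s (2*i))) (at s within {0..})"
    if "0 \<le> s" for s
    using der'[OF that, of "2*i"] Fg[OF ji] by (simp add: mult_2)
  have "y t (2*i) > exp (-(a (2*i) * t)) * y0 (2*i)"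
    using exp_growth(2)[of t "\<lambda>s. y s (2*i)" "\<lambda>s. a i * y s i" "a (2*i)", OF _ d _ 0(1) g] 0 g y00'
    by (auto intro: less_imp_le)
  moreover have "exp (-(a (2*i) * t)) * y0 (2*i) \<ge> 0" using y0nn' by simp
  ultimately show ?case by (simp add: mult_2)
next
  case (Suc m)
  define j where "j = (Suc m + 2) * i"
  have ji: "j > i" using i unfolding j_def by simp
  have jmi: "j - i = (m+2) * i" unfolding j_def by (simp add: algebra_simps)
  have g: "a ((m+2)*i) * y s ((m+2)*i) > 0" if "0 < s" "s < t" for s
  proof -
    have "ereal s \<le> ts" using that Suc.prems by (auto intro: order_trans[of _ "ereal t"])
    then have "y s ((m+2)*i) > 0" using Suc.IH that by simp
    moreover have "a ((m+2)*i) > 0" using a_pos i by simp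
    ultimately show ?thesis by simp
  qed
  have d: "((\<lambda>s. y s j) has_real_derivative (a ((m+2)*i) * y s ((m+2)*i) - a j * y s j)) (at s within {0..})"
    if "0 \<le> s" for s
    using der'[OF that, of j] Fg[OF ji] jmi by simp
  have "y t j > exp (-(a j * t)) * y0 j"
    using exp_growth(2)[of t "\<lambda>s. y s j" "\<lambda>s. a ((m+2)*i) * y s ((m+2)*i)" "a j", OF _ d _ Suc.prems(1) g] Suc.prems g y00'
    by (auto intro: less_imp_le)
  moreover have "exp (-(a j * t)) * y0 j \<ge> 0" using y0nn' by simp
  ultimately show ?case unfolding j_def by simp
qed

lemma yki: "k \<ge> 2 \<Longrightarrow> 0 < t \<Longrightarrow> ereal t \<le> ts \<Longrightarrow> y t (k * i) > 0"
proof -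
  assume "k \<ge> 2" "0 < t" "ereal t \<le> ts"
  moreover have "k-2+2 = k" using \<open>k \<ge> 2\<close> by simp
  ultimately show ?thesis using yki_aux[of t "k-2"] by metis
qed

lemma Fneg: "0 \<le> t \<Longrightarrow> ereal t \<le> ts \<Longrightarrow> F a i (y t) i < 0"
proof -
  assume t: "0 \<le> t" "ereal t \<le> ts"
  have sm: "summable (\<lambda>n. a (n+i) * y t (n+i))" using sumA[OF t(1)] .
  have nn: "a (n+i) * y t (n+i) \<ge> 0" for n
  proof -
    have "a (n+i) > 0" using a_pos i by simp
    then show ?thesis using ynn[OF t, of "n+i"] by simp
  qed
  show ?thesis
  proof (cases "ereal t < ts")
    case True
    then have "y t i > 0" using tsb t by simp
    moreover have "a i > 0" using a_pos i by simp
    moreover have "(\<Sum>n. a (n+i) * y t (n+i)) \<ge> 0" using suminf_nonneg[OF sm nn] .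
    ultimately have "a i * y t i > 0" by simp
    then show ?thesis unfolding Fii using \<open>(\<Sum>n. a (n+i) * y t (n+i)) \<ge> 0\<close> by linarith
  next
    case False
    then have e: "ts = ereal t" using t by simp
    then have "t > 0" using ts0 by simp
    then have "y t (2*i) > 0" using yki[of 2 t] t by simp
    then have "a (i+i) * y t (i+i) > 0" using a_pos i by (simp add: mult_2)
    then have "(\<Sum>n. a (n+i) * y t (n+i)) > 0" using suminf_pos2[OF sm nn, of i] by simp
    moreover have "y t i = 0" using tsz e by simp
    ultimately show ?thesis unfolding Fii by simp
  qed
qed

end
end


lemma F_ident:
  fixes w :: "nat \<Rightarrow> real" and x :: "nat \<Rightarrow> real"
  assumes i: "i \<ge> 1" and z: "\<forall>m<i. x m = 0"
  shows "(\<Sum>j<K. w j * F a i x j) = (if i < K then - w i * (\<Sum>n. a (n+i) * x (n+i)) else 0)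
     + (\<Sum>m<K. a m * x m * ((if m+i<K then w (m+i) else 0) - w m))"
proof (induction K)
  case 0
  then show ?case by simp
next
  case (Suc K)
  let ?S = "\<Sum>n. a (n+i) * x (n+i)"
  have split: "(\<Sum>m<K. a m * x m * ((if m+i<Suc K then w (m+i) else 0) - w m))
     = (\<Sum>m<K. a m * x m * ((if m+i<K then w (m+i) else 0) - w m))
       + (\<Sum>m<K. a m * x m * (if m+i = K then w K else 0))"
    by (subst sum.distrib[symmetric]) (rule sum.cong, auto simp: algebra_simps less_Suc_eq)
  have d: "(\<Sum>m<K. a m * x m * (if m+i = K then w K else 0)) = (if i \<le> K then a (K-i) * x (K-i) * w K else 0)"
  proof (cases "i \<le> K")
    case True
    have "K - i < K" using True i by simp
    have "(\<Sum>m<K. a m * x m * (if m+i = K then w K else 0)) = (\<Sum>m<K. if m = K - i then a m * x m * w K else 0)"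
      using True by (intro sum.cong) auto
    also have "\<dots> = a (K-i) * x (K-i) * w K" using \<open>K - i < K\<close> by (simp add: sum.delta')
    finally show ?thesis using True by simp
  next
    case False
    then show ?thesis by (intro trans[OF sum.neutral]) auto
  qed
  have x0: "x 0 = 0" using z i by simp
  have last: "a K * x K * ((if K+i<Suc K then w (K+i) else 0) - w K) = - a K * x K * w K"
    using i by simp
  consider "K < i" | "K = i" | "K > i" by linarith
  then show ?case
  proof cases
    case 1
    then show ?thesis using Suc split d last z unfolding F_def by simp
  next
    case 2
    then show ?thesis using Suc split d last x0 unfolding F_def by (simp add: algebra_simps)
  next
    case 3
    then show ?thesis using Suc split d last unfolding F_def by (simp add: algebra_simps)
  qed
qed

lemma F_series:
  fixes w :: "nat \<Rightarrow> real" and x :: "nat \<Rightarrow> real" and K :: nat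
  assumes i: "i \<ge> 1" and z: "\<forall>m<i. x m = 0" and sm: "summable (\<lambda>n. a (n+i) * x (n+i))"
  defines "coef \<equiv> \<lambda>m. (if i<K then - w i else 0) + (if m<K then (if m+i<K then w (m+i) else 0) - w m else 0)"
  shows "summable (\<lambda>m. a m * x m * coef m)"
    and "(\<Sum>j<K. w j * F a i x j) = (\<Sum>m. a m * x m * coef m)"
proof -
  define u where "u m = a m * x m" for m
  have su: "summable u" using sm summable_iff_shift[of u i] unfolding u_def by simp
  have S: "(\<Sum>n. a (n+i) * x (n+i)) = suminf u"
    using suminf_split_initial_segment[OF su, of i] z unfolding u_def by simp
  define g where "g m = u m * (if i<K then - w i else 0)" for m
  define h where "h m = (if m<K then u m * ((if m+i<K then w (m+i) else 0) - w m) else 0)" for m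
  have sg: "summable g" unfolding g_def by (intro summable_mult2 su)
  have sh: "summable h" unfolding h_def by (rule summable_finite[of "{..<K}"]) auto
  have eq: "(\<lambda>m. a m * x m * coef m) = (\<lambda>m. g m + h m)"
    unfolding coef_def g_def h_def u_def by (auto simp: algebra_simps)
  show "summable (\<lambda>m. a m * x m * coef m)" unfolding eq by (intro summable_add sg sh)
  have sg2: "suminf g = suminf u * (if i<K then - w i else 0)" unfolding g_def by (rule suminf_mult2[symmetric, OF su])
  moreover have sh2: "suminf h = (\<Sum>m<K. a m * x m * ((if m+i<K then w (m+i) else 0) - w m))"
    unfolding h_def u_def by (subst suminf_finite[of "{..<K}"]) auto
  ultimately have "(\<Sum>m. a m * x m * coef m) = (if i < K then - w i * (\<Sum>n. a (n+i) * x (n+i)) else 0)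
     + (\<Sum>m<K. a m * x m * ((if m+i<K then w (m+i) else 0) - w m))"
  proof -
    have "(\<Sum>m. a m * x m * coef m) = suminf g + suminf h" unfolding eq using suminf_add[OF sg sh] by simp
    then show ?thesis unfolding S sg2 sh2 by (cases "i < K") simp_all
  qed
  then show "(\<Sum>j<K. w j * F a i x j) = (\<Sum>m. a m * x m * coef m)"
    using F_ident[OF i z] by simp
qed



definition fm :: "(real \<Rightarrow> nat \<Rightarrow> real) \<Rightarrow> real \<Rightarrow> nat \<Rightarrow> real" where
  "fm y s m = real m * \<bar>y s m\<bar>"
definition Tl :: "(real \<Rightarrow> nat \<Rightarrow> real) \<Rightarrow> nat \<Rightarrow> real \<Rightarrow> real" where
  "Tl y L s = (\<Sum>m. if L \<le> m then fm y s m else 0)"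

lemma coef_upper:
  assumes "i \<ge> (1::nat)"
  shows "(if i<K then - real i else 0) + (if m<K then (if m+i<K then real (m+i) else 0) - real m else 0) \<le> 0"
  using assms by auto

lemma coef_lower:
  assumes "i \<ge> (1::nat)" "N \<ge> i" "K > N"
  shows "(if i<K then - real (min i N) else 0) + (if m<K then (if m+i<K then real (min (m+i) N) else 0) - real (min m N) else 0)
     \<ge> - (real i * (if N+1-i \<le> m then 1 else 0) + real N * (if K-i \<le> m then 1 else 0))"
  using assms by (auto simp: min_def)

context
  fixes i :: nat and a :: "nat \<Rightarrow> real" and A :: real
    and y0 :: "nat \<Rightarrow> real" and y :: "real \<Rightarrow> nat \<Rightarrow> real"
  assumes i: "i \<ge> 1"
    and A: "A > 0"
    and a_pos: "\<forall>j\<ge>1. a j > 0"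
    and a_le: "\<forall>j\<ge>1. a j \<le> A * real j"
    and y0: "y0 \<in> X1i_plus i"
    and y0i: "y0 i > 0"
    and sol: "is_solution a i y0 y"
begin

lemmas y00'' = y00[OF i A a_pos a_le y0 y0i sol]
lemmas summ'' = summ[OF i A a_pos a_le y0 y0i sol]
lemmas zb'' = zb[OF i A a_pos a_le y0 y0i sol]
lemmas der'' = der[OF i A a_pos a_le y0 y0i sol]
lemmas ncont'' = ncont[OF i A a_pos a_le y0 y0i sol]
lemmas sumA'' = sumA[OF i A a_pos a_le y0 y0i sol]

lemma fsum: "0 \<le> s \<Longrightarrow> summable (fm y s)"
  using summ'' unfolding fm_def by simp

lemma fnn: "fm y s m \<ge> 0" unfolding fm_def by simp

lemma Tsum: "0 \<le> s \<Longrightarrow> summable (\<lambda>m. if L \<le> m then fm y s m else 0)"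
  by (rule summable_comparison_test'[OF fsum, where N=0]) (auto simp: fnn)

lemma T_split: "0 \<le> s \<Longrightarrow> Tl y L s = suminf (fm y s) - (\<Sum>m<L. fm y s m)"
proof -
  assume s: "0 \<le> s"
  have e: "fm y s = (\<lambda>m. (if m < L then fm y s m else 0) + (if L \<le> m then fm y s m else 0))"
    by auto
  have s1: "summable (\<lambda>m. if m < L then fm y s m else 0)" by (rule summable_finite[of "{..<L}"]) auto
  have "suminf (fm y s) = (\<Sum>m. if m < L then fm y s m else 0) + Tl y L s"
    unfolding Tl_def by (subst e) (rule suminf_add[OF s1 Tsum[OF s], symmetric])
  moreover have "(\<Sum>m. if m < L then fm y s m else 0) = (\<Sum>m<L. fm y s m)"
    by (subst suminf_finite[of "{..<L}"]) auto
  ultimately show ?thesis by simp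
qed

lemma T_lim: "0 \<le> s \<Longrightarrow> (\<lambda>L. Tl y L s) \<longlonglongrightarrow> 0"
proof -
  assume s: "0 \<le> s"
  have "(\<lambda>L. suminf (fm y s) - (\<Sum>m<L. fm y s m)) \<longlonglongrightarrow> suminf (fm y s) - suminf (fm y s)"
    by (intro tendsto_diff tendsto_const summable_LIMSEQ fsum s)
  then show ?thesis using T_split[OF s] by simp
qed

lemma T_nn: "0 \<le> s \<Longrightarrow> Tl y L s \<ge> 0"
  unfolding Tl_def by (rule suminf_nonneg[OF Tsum]) (auto simp: fnn)

lemma T_mono: "0 \<le> s \<Longrightarrow> L \<le> L' \<Longrightarrow> Tl y L' s \<le> Tl y L s"
  unfolding Tl_def by (rule suminf_le[OF _ Tsum Tsum]) (auto simp: fnn)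

lemma T_cont: "0 \<le> s \<Longrightarrow> 0 \<le> s0 \<Longrightarrow> Tl y L s \<le> Tl y L s0 + norm11 (\<lambda>j. y s j - y s0 j)"
proof -
  assume s: "0 \<le> s" "0 \<le> s0"
  have sd: "summable (\<lambda>j. real j * \<bar>y s j - y s0 j\<bar>)"
  proof (rule summable_comparison_test'[where N=0])
    show "summable (\<lambda>j. fm y s j + fm y s0 j)" by (intro summable_add fsum s)
    show "norm (real n * \<bar>y s n - y s0 n\<bar>) \<le> fm y s n + fm y s0 n" for n
    proof -
      have "real n * \<bar>y s n - y s0 n\<bar> \<le> real n * (\<bar>y s n\<bar> + \<bar>y s0 n\<bar>)"
        by (intro mult_left_mono) auto
      then show ?thesis unfolding fm_def by (simp add: algebra_simps)
    qed
  qed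
  have "Tl y L s \<le> (\<Sum>m. (if L \<le> m then fm y s0 m else 0) + real m * \<bar>y s m - y s0 m\<bar>)"
    unfolding Tl_def
  proof (rule suminf_le[OF _ Tsum[OF s(1)] summable_add[OF Tsum[OF s(2)] sd]])
    fix m
    have "real m * \<bar>y s m\<bar> \<le> real m * (\<bar>y s0 m\<bar> + \<bar>y s m - y s0 m\<bar>)"
      by (intro mult_left_mono) auto
    then show "(if L \<le> m then fm y s m else 0) \<le> (if L \<le> m then fm y s0 m else 0) + real m * \<bar>y s m - y s0 m\<bar>"
      unfolding fm_def by (auto simp: algebra_simps)
  qed
  also have "\<dots> = Tl y L s0 + norm11 (\<lambda>j. y s j - y s0 j)"
    unfolding Tl_def norm11_def by (rule suminf_add[OF Tsum[OF s(2)] sd, symmetric])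
  finally show ?thesis .
qed


lemma T_unif:
  assumes t: "0 \<le> t" and e: "e > 0"
  shows "\<exists>L0. \<forall>L\<ge>L0. \<forall>s\<in>{0..t}. Tl y L s < e"
proof -
  have loc: "\<exists>L d. d > 0 \<and> (\<forall>s\<in>{0..t}. dist s s0 < d \<longrightarrow> Tl y L s < e)" if "s0 \<in> {0..t}" for s0
  proof -
    have s0: "0 \<le> s0" using that by simp
    have "\<forall>\<^sub>F L in sequentially. Tl y L s0 < e/2"
      by (rule order_tendstoD(2)[OF T_lim[OF s0]]) (simp add: e)
    then obtain L where "\<forall>n\<ge>L. Tl y n s0 < e/2" unfolding eventually_sequentially by blast
    then have L: "Tl y L s0 < e/2" by simp
    have "\<forall>\<^sub>F s in at s0 within {0..}. dist (norm11 (\<lambda>j. y s j - y s0 j)) 0 < e/2"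
      by (rule tendstoD[OF ncont''[OF s0]]) (simp add: e)
    then have "\<exists>d>0. \<forall>s\<in>{0..}. s \<noteq> s0 \<and> dist s s0 < d \<longrightarrow>
        dist (norm11 (\<lambda>j. y s j - y s0 j)) 0 < e/2" by (simp only: eventually_at)
    then obtain d where d: "d > 0" and dP: "\<forall>s\<in>{0..}. s \<noteq> s0 \<and> dist s s0 < d \<longrightarrow>
        dist (norm11 (\<lambda>j. y s j - y s0 j)) 0 < e/2"
      by blast
    have "Tl y L s < e" if "s \<in> {0..t}" "dist s s0 < d" for s
    proof (cases "s = s0")
      case True then show ?thesis using L e by simp
    next
      case False
      have "s \<in> {0..}" using that(1) by simp
      moreover have "s \<noteq> s0" using False by simp
      ultimately have "dist (norm11 (\<lambda>j. y s j - y s0 j)) 0 < e/2" using dP that(2) by blast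
      then have "norm11 (\<lambda>j. y s j - y s0 j) < e/2" by (simp add: dist_real_def)
      moreover have "Tl y L s \<le> Tl y L s0 + norm11 (\<lambda>j. y s j - y s0 j)"
        using T_cont[of s s0 L] that(1) s0 by simp
      ultimately show ?thesis using L by linarith
    qed
    then show ?thesis using d by (intro exI[of _ L] exI[of _ d]) simp
  qed
  have ex: "\<forall>s0\<in>{0..t}. \<exists>Ld::nat\<times>real. snd Ld > 0 \<and> (\<forall>s\<in>{0..t}. dist s s0 < snd Ld \<longrightarrow> Tl y (fst Ld) s < e)"
  proof
    fix s0 assume "s0 \<in> {0..t}"
    then obtain L d where "d > 0" "\<forall>s\<in>{0..t}. dist s s0 < d \<longrightarrow> Tl y L s < e" using loc by blast
    then show "\<exists>Ld::nat\<times>real. snd Ld > 0 \<and> (\<forall>s\<in>{0..t}. dist s s0 < snd Ld \<longrightarrow> Tl y (fst Ld) s < e)"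
      by (intro exI[of _ "(L,d)"]) simp
  qed
  obtain p where p: "\<forall>s0\<in>{0..t}. snd (p s0) > 0 \<and> (\<forall>s\<in>{0..t}. dist s s0 < snd (p s0) \<longrightarrow> Tl y (fst (p s0)) s < e)"
    using bchoice[OF ex] by blast
  define Lf where "Lf = (\<lambda>s. fst (p s))"
  define df where "df = (\<lambda>s. snd (p s))"
  have LD: "\<forall>s0\<in>{0..t}. df s0 > 0 \<and> (\<forall>s\<in>{0..t}. dist s s0 < df s0 \<longrightarrow> Tl y (Lf s0) s < e)"
    using p unfolding Lf_def df_def by blast
  obtain D where D: "D \<subseteq> {0..t}" "finite D" "{0..t} \<subseteq> (\<Union>c\<in>D. ball c (df c))"
  proof (rule compactE_image[OF compact_Icc, of "{0..t}" "\<lambda>c. ball c (df c)"])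
    show "{0..t} \<subseteq> (\<Union>c\<in>{0..t}. ball c (df c))"
    proof
      fix x assume x: "x \<in> {0..t}"
      then have "x \<in> ball x (df x)" using LD by simp
      with x show "x \<in> (\<Union>c\<in>{0..t}. ball c (df c))" by blast
    qed
  qed simp_all
  define L0 where "L0 = Max (insert 0 (Lf ` D))"
  have "\<forall>L\<ge>L0. \<forall>s\<in>{0..t}. Tl y L s < e"
  proof (intro allI impI ballI)
    fix L s assume L: "L \<ge> L0" and s: "s \<in> {0..t}"
    then obtain c where c: "c \<in> D" "dist c s < df c" using D by auto
    have "Lf c \<le> L0" unfolding L0_def using c D by (intro Max_ge) auto
    then have "Tl y L s \<le> Tl y (Lf c) s" using L s by (intro T_mono) auto
    also have "\<dots> < e"
    proof -
      have cc: "c \<in> {0..t}" using c D by blast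
      then have "\<forall>s\<in>{0..t}. dist s c < df c \<longrightarrow> Tl y (Lf c) s < e" using LD by blast
      moreover have "dist s c < df c" using c(2) by (simp add: dist_commute)
      ultimately show ?thesis using s by blast
    qed
    finally show "Tl y L s < e" .
  qed
  then show ?thesis by blast
qed

end


context
  fixes i :: nat and a :: "nat \<Rightarrow> real" and A :: real
    and y0 :: "nat \<Rightarrow> real" and y :: "real \<Rightarrow> nat \<Rightarrow> real" and ts :: ereal
  assumes i: "i \<ge> 1"
    and A: "A > 0"
    and a_pos: "\<forall>j\<ge>1. a j > 0"
    and a_le: "\<forall>j\<ge>1. a j \<le> A * real j"
    and y0: "y0 \<in> X1i_plus i"
    and y0i: "y0 i > 0"
    and sol: "is_solution a i y0 y"
    and ts0: "ts > 0" and tsb: "\<forall>s. 0 \<le> s \<and> ereal s < ts \<longrightarrow> y s i > 0"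
    and tsz: "\<forall>s. ts = ereal s \<longrightarrow> y s i = 0"
begin

lemmas H = i A a_pos a_le y0 y0i sol
lemmas HT = H ts0 tsb tsz

lemma Phi_der: "0 \<le> s \<Longrightarrow> ((\<lambda>s. \<Sum>j<K. w j * y s j) has_real_derivative (\<Sum>j<K. w j * F a i (y s) j)) (at s within {0..})"
  by (intro DERIV_sum DERIV_cmult der[OF H])

lemma u_nn: "0 \<le> s \<Longrightarrow> ereal s \<le> ts \<Longrightarrow> a m * y s m \<ge> 0"
proof -
  assume s: "0 \<le> s" "ereal s \<le> ts"
  show ?thesis
  proof (cases "m = 0")
    case True then show ?thesis using zb[OF H s(1), of 0] i by simp
  next
    case False
    then have "a m > 0" using a_pos by simp
    then show ?thesis using ynn[OF HT s] by simp
  qed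
qed

lemma u_le: "0 \<le> s \<Longrightarrow> ereal s \<le> ts \<Longrightarrow> a m * y s m \<le> A * fm y s m"
proof -
  assume s: "0 \<le> s" "ereal s \<le> ts"
  show ?thesis
  proof (cases "m = 0")
    case True then show ?thesis using zb[OF H s(1), of 0] i unfolding fm_def by simp
  next
    case False
    then have "a m \<le> A * real m" using a_le by simp
    moreover have "y s m \<ge> 0" using ynn[OF HT s] .
    ultimately have "a m * y s m \<le> (A * real m) * y s m" by (intro mult_right_mono)
    then show ?thesis using \<open>y s m \<ge> 0\<close> unfolding fm_def by (simp add: mult.assoc)
  qed
qed

lemma upper_K: "0 \<le> t \<Longrightarrow> ereal t \<le> ts \<Longrightarrow> (\<Sum>j<K. real j * y t j) \<le> (\<Sum>j<K. real j * y 0 j)"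
proof -
  assume t: "0 \<le> t" "ereal t \<le> ts"
  show ?thesis
  proof (cases "t = 0")
    case True then show ?thesis by simp
  next
    case False
    then have tp: "0 < t" using t by simp
    obtain \<xi> where x: "0 < \<xi>" "\<xi> < t"
      "(\<Sum>j<K. real j * y t j) - (\<Sum>j<K. real j * y 0 j) = t * (\<Sum>j<K. real j * F a i (y \<xi>) j)"
      using mvt0[OF tp Phi_der] by blast
    have xg: "0 \<le> \<xi>" "ereal \<xi> \<le> ts" using x t order_trans[of "ereal \<xi>" "ereal t" ts] by auto
    have z: "\<forall>m<i. y \<xi> m = 0" using zb[OF H xg(1)] by simp
    note FS = F_series[OF i z sumA[OF H xg(1)], where K=K and w="\<lambda>j. real j"]
    have "(\<Sum>j<K. real j * F a i (y \<xi>) j) \<le> (\<Sum>m. (0::real))"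
      unfolding FS(2)
    proof (rule suminf_le[OF _ FS(1)])
      fix m
      show "a m * y \<xi> m * ((if i<K then - real i else 0) + (if m<K then (if m+i<K then real (m+i) else 0) - real m else 0)) \<le> 0"
        using u_nn[OF xg, of m] coef_upper[OF i, of K m] by (intro mult_nonneg_nonpos)
    qed simp
    then have "(\<Sum>j<K. real j * F a i (y \<xi>) j) \<le> 0" by simp
    then have "t * (\<Sum>j<K. real j * F a i (y \<xi>) j) \<le> 0" using tp by (intro mult_nonneg_nonpos) auto
    then show ?thesis using x(3) by linarith
  qed
qed

lemma norm_upper: "0 \<le> t \<Longrightarrow> ereal t \<le> ts \<Longrightarrow> norm11 (y t) \<le> norm11 y0"
proof -
  assume t: "0 \<le> t" "ereal t \<le> ts"
  have "norm11 (y t) = suminf (fm y t)" unfolding norm11_def fm_def by simp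
  also have "\<dots> \<le> norm11 y0"
  proof (rule suminf_le_const[OF fsum[OF H t(1)]])
    fix n
    have "sum (fm y t) {..<n} = (\<Sum>j<n. real j * y t j)"
      using ynn[OF HT t] unfolding fm_def by simp
    also have "\<dots> \<le> (\<Sum>j<n. real j * y 0 j)" by (rule upper_K[OF t])
    also have "\<dots> = sum (fm y 0) {..<n}" using y0nn[OF H] y00[OF H] unfolding fm_def by simp
    also have "\<dots> \<le> suminf (fm y 0)" by (rule sum_le_suminf[OF fsum[OF H]]) (auto simp: fnn[OF H])
    also have "\<dots> = norm11 y0" unfolding norm11_def fm_def y00[OF H] by simp
    finally show "sum (fm y t) {..<n} \<le> norm11 y0" .
  qed
  finally show ?thesis .
qed


lemma lower_K:
  assumes t: "0 < t" "ereal t \<le> ts" and N: "N \<ge> i" and K: "K > N"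
  shows "\<exists>\<xi>. 0 < \<xi> \<and> \<xi> < t \<and> (\<Sum>j<K. real (min j N) * y t j) - (\<Sum>j<K. real (min j N) * y 0 j)
     \<ge> - (t * (A * (real i * Tl y (N+1-i) \<xi> + real N * Tl y (K-i) \<xi>)))"
proof -
  obtain \<xi> where x: "0 < \<xi>" "\<xi> < t"
    "(\<Sum>j<K. real (min j N) * y t j) - (\<Sum>j<K. real (min j N) * y 0 j) = t * (\<Sum>j<K. real (min j N) * F a i (y \<xi>) j)"
    using mvt0[OF t(1) Phi_der[where w="\<lambda>j. real (min j N)" and K=K]] by blast
  have xg: "0 \<le> \<xi>" "ereal \<xi> \<le> ts" using x t order_trans[of "ereal \<xi>" "ereal t" ts] by auto
  have z: "\<forall>m<i. y \<xi> m = 0" using zb[OF H xg(1)] by simp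
  note FS = F_series[OF i z sumA[OF H xg(1)], where K=K and w="\<lambda>j. real (min j N)"]
  define g1 where "g1 m = (if N+1-i \<le> m then fm y \<xi> m else 0)" for m
  define g2 where "g2 m = (if K-i \<le> m then fm y \<xi> m else 0)" for m
  have sm: "(\<lambda>m. - (A * (real i * g1 m + real N * g2 m))) sums (- (A * (real i * Tl y (N+1-i) \<xi> + real N * Tl y (K-i) \<xi>)))"
    unfolding Tl_def g1_def g2_def by (intro sums_minus sums_mult sums_add summable_sums Tsum[OF H xg(1)])
  have "(\<Sum>m. - (A * (real i * g1 m + real N * g2 m))) \<le> (\<Sum>j<K. real (min j N) * F a i (y \<xi>) j)"
    unfolding FS(2)
  proof (rule suminf_le[OF _ sums_summable[OF sm] FS(1)])
    fix m
    define c where "c = real i * (if N+1-i \<le> m then 1 else 0) + real N * (if K-i \<le> m then 1 else 0)"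
    define co where "co = (if i<K then - real (min i N) else 0) + (if m<K then (if m+i<K then real (min (m+i) N) else 0) - real (min m N) else 0)"
    have c0: "c \<ge> 0" unfolding c_def by simp
    have "co \<ge> - c" unfolding co_def c_def using coef_lower[OF i N K, of m] by simp
    then have "a m * y \<xi> m * co \<ge> a m * y \<xi> m * (- c)" using u_nn[OF xg, of m] by (intro mult_left_mono)
    moreover have "a m * y \<xi> m * c \<le> A * fm y \<xi> m * c" using u_le[OF xg, of m] c0 by (intro mult_right_mono)
    moreover have eq: "- (A * (real i * g1 m + real N * g2 m)) = - (A * fm y \<xi> m * c)"
      unfolding g1_def g2_def c_def by (simp add: algebra_simps)
    ultimately show "- (A * (real i * g1 m + real N * g2 m)) \<le> a m * y \<xi> m * co" unfolding eq by linarith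
  qed
  then have "(\<Sum>j<K. real (min j N) * F a i (y \<xi>) j) \<ge> - (A * (real i * Tl y (N+1-i) \<xi> + real N * Tl y (K-i) \<xi>))"
    using sums_unique[OF sm] by simp
  then have "t * (\<Sum>j<K. real (min j N) * F a i (y \<xi>) j) \<ge> t * (- (A * (real i * Tl y (N+1-i) \<xi> + real N * Tl y (K-i) \<xi>)))"
    using t(1) by (intro mult_left_mono) auto
  then show ?thesis using x by (intro exI[of _ \<xi>]) simp
qed


lemma norm_lower: "0 \<le> t \<Longrightarrow> ereal t \<le> ts \<Longrightarrow> norm11 y0 \<le> norm11 (y t)"
proof -
  assume t: "0 \<le> t" "ereal t \<le> ts"
  show ?thesis
  proof (cases "t = 0")
    case True then show ?thesis using y00[OF H] by simp
  next
    case False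
    then have tp: "0 < t" using t by simp
    show ?thesis
    proof (rule field_le_epsilon)
      fix e :: real assume e: "0 < e"
      define c1 where "c1 = t * A * real i"
      have c1: "c1 \<ge> 0" unfolding c1_def using tp A by simp
      define e1 where "e1 = e / (3 * (c1 + 1))"
      have e1: "e1 > 0" "e1 * (c1 + 1) = e/3" unfolding e1_def using e c1 by (auto simp: field_simps)
      obtain L1 where L1: "\<forall>L\<ge>L1. \<forall>s\<in>{0..t}. Tl y L s < e1" using T_unif[OF H t(1) e1(1)] by blast
      define N where "N = max i (L1 + i)"
      have N: "N \<ge> i" "N \<ge> L1" "N + 1 - i \<ge> L1" unfolding N_def by auto
      define c2 where "c2 = t * A * real N"
      have c2: "c2 \<ge> 0" unfolding c2_def using tp A by simp
      define e2 where "e2 = e / (3 * (c2 + 1))"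
      have e2: "e2 > 0" "e2 * (c2 + 1) = e/3" unfolding e2_def using e c2 by (auto simp: field_simps)
      obtain L2 where L2: "\<forall>L\<ge>L2. \<forall>s\<in>{0..t}. Tl y L s < e2" using T_unif[OF H t(1) e2(1)] by blast
      define K where "K = max (N+1) (L2 + i)"
      have K: "K > N" "K - i \<ge> L2" unfolding K_def by auto
      obtain \<xi> where x: "0 < \<xi>" "\<xi> < t" and
        low: "(\<Sum>j<K. real (min j N) * y t j) - (\<Sum>j<K. real (min j N) * y 0 j)
         \<ge> - (t * (A * (real i * Tl y (N+1-i) \<xi> + real N * Tl y (K-i) \<xi>)))"
        using lower_K[OF tp t(2) N(1) K(1)] by blast
      have xin: "\<xi> \<in> {0..t}" using x by simp
      have T1: "Tl y (N+1-i) \<xi> < e1" "Tl y (N+1-i) \<xi> \<ge> 0"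
        using L1[rule_format, OF N(3) xin] T_nn[OF H, of \<xi>] x by auto
      have T2: "Tl y (K-i) \<xi> < e2" "Tl y (K-i) \<xi> \<ge> 0"
        using L2[rule_format, OF K(2) xin] T_nn[OF H, of \<xi>] x by auto
      have T0: "Tl y N 0 < e1" using L1 N t by auto
      have "c1 * Tl y (N+1-i) \<xi> \<le> c1 * e1" using T1 c1 by (intro mult_left_mono) auto
      also have "\<dots> \<le> e/3" using e1 by (simp add: algebra_simps)
      finally have b1: "c1 * Tl y (N+1-i) \<xi> \<le> e/3" .
      have "c2 * Tl y (K-i) \<xi> \<le> c2 * e2" using T2 c2 by (intro mult_left_mono) auto
      also have "\<dots> \<le> e/3" using e2 by (simp add: algebra_simps)
      finally have b2: "c2 * Tl y (K-i) \<xi> \<le> e/3" .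
      have b0: "e1 \<le> e/3"
      proof -
        have "e1 * c1 \<ge> 0" using e1 c1 by simp
        moreover have "e1 * (c1 + 1) = e1 * c1 + e1" by (simp add: algebra_simps)
        ultimately show ?thesis using e1(2) by linarith
      qed
      have tsplit: "t * (A * (real i * Tl y (N+1-i) \<xi> + real N * Tl y (K-i) \<xi>))
         = c1 * Tl y (N+1-i) \<xi> + c2 * Tl y (K-i) \<xi>" unfolding c1_def c2_def by (simp add: algebra_simps)
      have up: "(\<Sum>j<K. real (min j N) * y t j) \<le> norm11 (y t)"
      proof -
        have "(\<Sum>j<K. real (min j N) * y t j) \<le> (\<Sum>j<K. fm y t j)"
          unfolding fm_def by (intro sum_mono) (simp add: mult_right_mono ynn[OF HT t])
        also have "\<dots> \<le> suminf (fm y t)" by (rule sum_le_suminf[OF fsum[OF H t(1)]]) (auto simp: fnn[OF H])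
        also have "\<dots> = norm11 (y t)" unfolding norm11_def fm_def by simp
        finally show ?thesis .
      qed
      have lo: "(\<Sum>j<K. real (min j N) * y 0 j) \<ge> norm11 y0 - Tl y N 0"
      proof -
        have "norm11 y0 - Tl y N 0 = (\<Sum>j<N. fm y 0 j)"
          using T_split[OF H, of 0 N] unfolding norm11_def fm_def y00[OF H] by simp
        also have "\<dots> = (\<Sum>j<N. real (min j N) * y 0 j)"
          using y0nn[OF H] y00[OF H] unfolding fm_def by (intro sum.cong) auto
        also have "\<dots> \<le> (\<Sum>j<K. real (min j N) * y 0 j)"
          using y0nn[OF H] y00[OF H] K by (intro sum_mono2) auto
        finally show ?thesis .
      qed
      show "norm11 y0 \<le> norm11 (y t) + e"
        using up lo low tsplit b1 b2 b0 T0 by linarith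
    qed
  qed
qed

lemma norm_eq: "0 \<le> t \<Longrightarrow> ereal t \<le> ts \<Longrightarrow> norm11 (y t) = norm11 y0"
  using norm_lower norm_upper by (simp add: order.antisym)

end


theorem proposition2p3:
  fixes i :: nat and a :: "nat \<Rightarrow> real" and A :: real
    and y0 :: "nat \<Rightarrow> real" and y :: "real \<Rightarrow> nat \<Rightarrow> real"
  assumes i: "i \<ge> 1"
    and A: "A > 0"
    and a_pos: "\<forall>j\<ge>1. a j > 0"
    and a_le: "\<forall>j\<ge>1. a j \<le> A * real j"
    and y0: "y0 \<in> X1i_plus i"
    and y0i: "y0 i > 0"
    and sol: "is_solution a i y0 y"
  shows "\<exists>ts ts1 :: ereal. 0 < ts \<and> ts \<le> ts1 \<and>
     (\<forall>t::real. 0 \<le> t \<and> ereal t < ts \<longrightarrow> y t i > 0) \<and>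
     (\<forall>t::real. ts = ereal t \<longrightarrow> y t i = 0) \<and>
     (\<forall>t::real. 0 < t \<and> ereal t < ts \<longrightarrow> (\<forall>k\<ge>2. y t (k * i) > 0)) \<and>
     (\<forall>t::real. 0 \<le> t \<and> ereal t < ts \<longrightarrow> (\<forall>j\<ge>i + 1. y t j \<ge> 0)) \<and>
     (\<forall>t::real. 0 \<le> t \<and> ereal t < ts \<longrightarrow> (\<forall>j\<ge>i + 1. y0 j > 0 \<longrightarrow> y t j > 0)) \<and>
     (\<forall>t::real. 0 \<le> t \<and> ereal t < ts1 \<longrightarrow> F a i (y t) i < 0) \<and>
     (\<forall>t::real. 0 \<le> t \<and> ereal t < ts \<longrightarrow> norm11 (y t) = norm11 y0) \<and>
     (\<forall>t::real. ts = ereal t \<longrightarrow>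
        ts < ts1 \<and>
        (\<forall>k\<ge>2. y t (k * i) > 0) \<and>
        (\<forall>j\<ge>i + 1. y t j \<ge> 0) \<and>
        (\<forall>j\<ge>i + 1. y0 j > 0 \<longrightarrow> y t j > 0) \<and>
        norm11 (y t) = norm11 y0)"
proof -
  note H = i A a_pos a_le y0 y0i sol
  obtain ts :: ereal where ts0: "ts > 0" and tsb: "\<forall>s. 0 \<le> s \<and> ereal s < ts \<longrightarrow> y s i > 0"
    and tsz: "\<forall>s. ts = ereal s \<longrightarrow> y s i = 0"
    using exists_ts[OF H] by blast
  note HT = H ts0 tsb tsz
  have common: "(\<forall>t::real. 0 \<le> t \<and> ereal t < ts \<longrightarrow> y t i > 0) \<and>
     (\<forall>t::real. ts = ereal t \<longrightarrow> y t i = 0) \<and>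
     (\<forall>t::real. 0 < t \<and> ereal t < ts \<longrightarrow> (\<forall>k\<ge>2. y t (k * i) > 0)) \<and>
     (\<forall>t::real. 0 \<le> t \<and> ereal t < ts \<longrightarrow> (\<forall>j\<ge>i + 1. y t j \<ge> 0)) \<and>
     (\<forall>t::real. 0 \<le> t \<and> ereal t < ts \<longrightarrow> (\<forall>j\<ge>i + 1. y0 j > 0 \<longrightarrow> y t j > 0)) \<and>
     (\<forall>t::real. 0 \<le> t \<and> ereal t < ts \<longrightarrow> norm11 (y t) = norm11 y0)"
    using tsb tsz yki[OF HT] ynn[OF HT] ypos[OF HT] norm_eq[OF HT] by (auto simp: less_imp_le)
  have atT: "(\<forall>k\<ge>2. y T (k * i) > 0) \<and> (\<forall>j\<ge>i + 1. y T j \<ge> 0) \<and>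
        (\<forall>j\<ge>i + 1. y0 j > 0 \<longrightarrow> y T j > 0) \<and> norm11 (y T) = norm11 y0" if T: "ts = ereal T" for T
  proof -
    have "T > 0" using ts0 T by simp
    then show ?thesis using T yki[OF HT] ynn[OF HT] ypos[OF HT] norm_eq[OF HT] by auto
  qed
  show ?thesis
  proof (cases ts)
    case PInf
    have "\<forall>t::real. 0 \<le> t \<and> ereal t < ts \<longrightarrow> F a i (y t) i < 0"
      using Fneg[OF HT] by (auto simp: less_imp_le)
    then show ?thesis using common ts0 PInf by (intro exI[of _ ts]) auto
  next
    case MInf
    then show ?thesis using ts0 by simp
  next
    case (real T)
    have T0: "T > 0" using ts0 real by simp
    have FT: "F a i (y T) i < 0" using Fneg[OF HT, of T] real T0 by simp
    have "\<exists>d>0. \<forall>s\<in>{0..}. dist s T < d \<longrightarrow> dist (F a i (y s) i) (F a i (y T) i) < - F a i (y T) i"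
      using Fcont[OF H, of i] FT T0 unfolding continuous_on_iff by auto
    then obtain d where d: "d > 0" and dP: "\<forall>s\<in>{0..}. dist s T < d \<longrightarrow> dist (F a i (y s) i) (F a i (y T) i) < - F a i (y T) i"
      by blast
    have Fneg1: "F a i (y t) i < 0" if "0 \<le> t" "ereal t < ereal (T + d)" for t
    proof (cases "t \<le> T")
      case True then show ?thesis using Fneg[OF HT, of t] that real by simp
    next
      case False
      then have "dist t T < d" using that by (simp add: dist_real_def)
      then have "dist (F a i (y t) i) (F a i (y T) i) < - F a i (y T) i" using dP that by simp
      then show ?thesis by (simp add: dist_real_def)
    qed
    show ?thesis
      using common ts0 real d atT Fneg1
      by (intro exI[of _ ts] exI[of _ "ereal (T + d)"]) auto
  qed
qed


end
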